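(* Let $\mathcal H$ be any class of group-aware hypotheses $\mathcal X\times\{A,B\}\to\{0,1\}$ and $\mathcal D$ any distribution over $\mathcal X\times\{A,B\}\times\{0,1\}$. Assume there is an integer $c\ge1$ such that for each group $g\in\{A,B\}$, $\Pr_{\mathcal D}[y=1\wedge x\in g]\ge\Pr_{\mathcal D}[x\in g]/c$, and that both groups have positive probability. Suppose $h^*\in\mathcal H$ minimizes $\Pr_{\mathcal D}[h(x,z)\ne y]$ over all $h\in\mathcal H$ satisfying Equal Opportunity on $\mathcal D$. Then there are constants $C>0$, $\alpha_0\in(0,1)$ depending only on $c$ such that for every $\alpha\in[0,\alpha_0]$ and every corrupted distribution $\widetilde{\mathcal D}=(1-\alpha)\mathcal D+\alpha\mathcal Q$ ($\mathcal Q$ arbitrary), a robust fair-ERM learner for the Equal Opportunity constraint returns a hypothesis $\hat h$ in the $(P,Q)$-randomized expansion $\mathcal{PQ}(\mathcal H)$ satisfying Equal Opportunity on $\widetilde{\mathcal D}$ and $$\Big|\mathbb E_{\mathcal D}[\mathbf 1(\hat h(x,z)\ne y)]-\mathbb E_{\mathcal D}[\mathbf 1(h^*(x,z)\ne y)]\Big|\le C\sqrt\alpha;$$ that is, such a hypothesis exists in $\mathcal{PQ}(\mathcal H)$.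
   Context: Equal Opportunity of a (possibly randomized) hypothesis $h$ on a distribution: $\Pr[h(x,z)=1\mid y=1,z=A]=\Pr[h(x,z)=1\mid y=1,z=B]$, probabilities also over the hypothesis's randomness. $\mathcal{PQ}(\mathcal H)$ consists of randomized hypotheses obtained from some $h\in\mathcal H$ and parameters $p_A,q_A,p_B,q_B\in[0,1]$ that on input $(x,z)$ output $h(x,z)$ with probability $1-p_z$ and otherwise an independent $\mathrm{Bernoulli}(q_z)$ bit. Errors of randomized hypotheses are expected errors. *)

theory Defs
  imports "HOL-Probability.Probability"
begin

datatype grp = A | B

type_synonym 'x sample = "'x \<times> grp \<times> bool"

(* a (possibly randomized) hypothesis is represented by the function giving,
   for each input (x,z), the probability that it outputs 1 *)
definition ind :: "('x \<times> grp \<Rightarrow> bool) \<Rightarrow> 'x \<times> grp \<Rightarrow> real" where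
  "ind h = (\<lambda>xz. if h xz then 1 else 0)"

definition PQ :: "('x \<times> grp \<Rightarrow> bool) set \<Rightarrow> ('x \<times> grp \<Rightarrow> real) set" where
  "PQ H = {(\<lambda>(x, z). (1 - p z) * ind h (x, z) + p z * q z) | h p q.
              h \<in> H \<and> (\<forall>g. 0 \<le> p g \<and> p g \<le> 1 \<and> 0 \<le> q g \<and> q g \<le> 1)}"

definition err :: "'x sample measure \<Rightarrow> ('x \<times> grp \<Rightarrow> real) \<Rightarrow> real" where
  "err M ph = (\<integral>(x, z, y). (if y then 1 - ph (x, z) else ph (x, z)) \<partial>M)"

definition tpr :: "'x sample measure \<Rightarrow> ('x \<times> grp \<Rightarrow> real) \<Rightarrow> grp \<Rightarrow> real" where
  "tpr M ph g = (\<integral>(x, z, y). (if y \<and> z = g then ph (x, z) else 0) \<partial>M)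
                / measure M {(x, z, y) \<in> space M. y \<and> z = g}"

definition equal_opportunity :: "'x sample measure \<Rightarrow> ('x \<times> grp \<Rightarrow> real) \<Rightarrow> bool" where
  "equal_opportunity M ph \<longleftrightarrow> tpr M ph A = tpr M ph B"

definition mix_measure :: "real \<Rightarrow> 'a measure \<Rightarrow> 'a measure \<Rightarrow> 'a measure" where
  "mix_measure \<alpha> D Q = measure_of (space D) (sets D)
      (\<lambda>S. ennreal (1 - \<alpha>) * emeasure D S + ennreal \<alpha> * emeasure Q S)"

end

theory Submission
  imports Defs
begin


lemma core_dir:
  fixes tA tB s :: real
  assumes "0\<le>tA" "tA\<le>1" "0\<le>tB" "tB\<le>1" "tB \<le> tA" "tA - tB \<le> 4 * s"
  shows "\<exists>pA qA pB qB. 0\<le>pA \<and> pA\<le>1 \<and> 0\<le>qA \<and> qA\<le>1 \<and> 0\<le>pB \<and> pB\<le>1 \<and> 0\<le>qB \<and> qB\<le>1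
     \<and> (1-pA) * tA + pA * qA = (1-pB) * tB + pB * qB \<and> pA \<le> 8 * s \<and> pB \<le> 8 * s"
proof (cases "tA \<ge> 1/2")
  case True
  define pA where "pA = (tA-tB)/tA"
  have t0: "tA > 0" using True by simp
  have m: "tA-tB \<le> (tA-tB) * (2 * tA)" using mult_left_mono[of 1 "2 * tA" "tA-tB"] True assms by simp
  have p2: "pA \<le> 2 * (tA-tB)" unfolding pA_def
  proof (subst pos_divide_le_eq[OF t0])
    have "2 * (tA-tB) * tA = (tA-tB) * (2 * tA)" by simp
    then show "tA - tB \<le> 2 * (tA-tB) * tA" using m by (simp add: algebra_simps)
  qed
  have f2: "0 \<le> pA" "pA \<le> 1" unfolding pA_def using t0 assms by (auto simp: divide_le_eq)
  have f3: "(1-pA) * tA = tB" unfolding pA_def using t0 by (simp add: field_simps)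
  have f4: "0 \<le> s" using assms by simp
  have f1: "pA \<le> 8 * s" using p2 assms(6) by (simp add: algebra_simps)
  note f = f1 f2 f3 f4
  show ?thesis
    by (intro exI[of _ pA] exI[of _ 0] exI[of _ 0] exI[of _ 0]) (simp add: f)
next
  case False
  define pB where "pB = (tA-tB)/(1-tB)"
  have t0: "1 - tB > 0" using False assms by simp
  have m: "tA-tB \<le> (tA-tB) * (2 * (1-tB))" using mult_left_mono[of 1 "2 * (1-tB)" "tA-tB"] False assms by simp
  have p2: "pB \<le> 2 * (tA-tB)" unfolding pB_def
  proof (subst pos_divide_le_eq[OF t0])
    have "2 * (tA-tB) * (1-tB) = (tA-tB) * (2 * (1-tB))" by (simp add: algebra_simps)
    then show "tA - tB \<le> 2 * (tA-tB) * (1-tB)" using m by (simp add: algebra_simps)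
  qed
  have f2: "0 \<le> pB" "pB \<le> 1" unfolding pB_def using t0 assms by (auto simp: divide_le_eq)
  have k: "pB * (1-tB) = tA-tB" unfolding pB_def using t0 by simp
  have "(1-pB) * tB + pB = tB + pB * (1-tB)" by (simp add: algebra_simps)
  then have f3: "(1-pB) * tB + pB = tA" using k by simp
  have f4: "0 \<le> s" using assms by simp
  have f1: "pB \<le> 8 * s" using p2 assms(6) by (simp add: algebra_simps)
  note f = f1 f2 f3 f4
  show ?thesis
    by (intro exI[of _ 0] exI[of _ 0] exI[of _ pB] exI[of _ 1]) (simp add: f)
qed

lemma core:
  fixes tA tB \<tau> bA bB wA wB \<alpha> c :: real
  assumes "0 \<le> \<alpha>" "0\<le>tA" "tA\<le>1" "0\<le>tB" "tB\<le>1" "0<bA" "0<bB" "wA \<le> c * bA" "wB \<le> c * bB"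
    "0 \<le> wA" "wA \<le> 1" "0\<le>wB" "wB\<le>1" "\<bar>tA - \<tau>\<bar> * bA \<le> 2 * \<alpha>" "\<bar>tB-\<tau>\<bar> * bB \<le> 2 * \<alpha>" "c \<ge> 0"
  shows "\<exists>pA qA pB qB. 0\<le>pA \<and> pA\<le>1 \<and> 0\<le>qA \<and> qA\<le>1 \<and> 0\<le>pB \<and> pB\<le>1 \<and> 0\<le>qB \<and> qB\<le>1
     \<and> (1-pA) * tA + pA * qA = (1-pB) * tB + pB * qB \<and> pA * wA + pB * wB \<le> (16 + c) * sqrt \<alpha>"
proof -
  define s where "s = sqrt \<alpha>"
  have s0: "s \<ge> 0" using assms s_def by simp
  show ?thesis
  proof (cases "bA < s")
    case True
    have "c * bA \<le> c * s" using assms True by (intro mult_left_mono) auto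
    then have "wA \<le> c * s" using assms by linarith
    moreover have "(16+c) * s = 16 * s + c * s" by (simp add: algebra_simps)
    ultimately have "1 * wA + 0 * wB \<le> (16+c) * s" using s0 by simp
    then show ?thesis using assms unfolding s_def
      by (intro exI[of _ 1] exI[of _ tB] exI[of _ 0] exI[of _ 0]) auto
  next
    case nA: False
    show ?thesis
    proof (cases "bB < s")
      case True
      have "c * bB \<le> c * s" using assms True by (intro mult_left_mono) auto
      then have "wB \<le> c * s" using assms by linarith
      moreover have "(16+c) * s = 16 * s + c * s" by (simp add: algebra_simps)
      ultimately have "0 * wA + 1 * wB \<le> (16+c) * s" using s0 by simp
      then show ?thesis using assms unfolding s_def
        by (intro exI[of _ 0] exI[of _ 0] exI[of _ 1] exI[of _ tA]) auto
    next
      case nB: False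
      have dev: "\<bar>t - \<tau>\<bar> \<le> 2 * s" if "\<bar>t - \<tau>\<bar> * b \<le> 2 * \<alpha>" "b \<ge> s" "b > 0" for t b
      proof (cases "\<alpha> = 0")
        case True
        then have "\<bar>t - \<tau>\<bar> * b \<le> 0" using that by simp
        then have "\<bar>t - \<tau>\<bar> \<le> 0" using that(3) by (simp add: mult_le_0_iff)
        then show ?thesis using s0 by simp
      next
        case False
        then have sp: "s > 0" using assms s_def by simp
        have "\<bar>t - \<tau>\<bar> * s \<le> \<bar>t - \<tau>\<bar> * b" using that by (simp add: mult_left_mono)
        also have "\<dots> \<le> 2 * \<alpha>" by fact
        also have "\<dots> = (2 * s) * s" using assms s_def by simp
        finally show ?thesis using sp by simp
      qed
      have dA: "\<bar>tA - \<tau>\<bar> \<le> 2 * s" using dev assms nA by simp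
      have dB: "\<bar>tB - \<tau>\<bar> \<le> 2 * s" using dev assms nB by simp
      have fin: "pA * wA + pB * wB \<le> (16+c) * s" if "0\<le>pA" "pA \<le> 8 * s" "0 \<le> pB" "pB \<le> 8 * s" for pA pB
      proof -
        have "pA * wA \<le> pA" "pB * wB \<le> pB" using that assms by (auto simp: mult_left_le)
        moreover have "c * s \<ge> 0" using assms s0 by simp
        ultimately show ?thesis using that by (auto simp: algebra_simps)
      qed
      show ?thesis
      proof (cases "tB \<le> tA")
        case True
        then obtain pA qA pB qB where h: "0\<le>pA \<and> pA\<le>1 \<and> 0\<le>qA \<and> qA\<le>1 \<and> 0\<le>pB \<and> pB\<le>1 \<and> 0\<le>qB \<and> qB\<le>1
          \<and> (1-pA) * tA + pA * qA = (1-pB) * tB + pB * qB \<and> pA \<le> 8 * s \<and> pB \<le> 8 * s"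
          using core_dir[of tA tB s] assms dA dB by fastforce
        then show ?thesis using fin[of pA pB] unfolding s_def by blast
      next
        case False
        then obtain pA qA pB qB where h: "0\<le>pA \<and> pA\<le>1 \<and> 0\<le>qA \<and> qA\<le>1 \<and> 0\<le>pB \<and> pB\<le>1 \<and> 0\<le>qB \<and> qB\<le>1
          \<and> (1-pA) * tB + pA * qA = (1-pB) * tA + pB * qB \<and> pA \<le> 8 * s \<and> pB \<le> 8 * s"
          using core_dir[of tB tA s] assms dA dB by fastforce
        then show ?thesis using fin[of pB pA] unfolding s_def
          by (intro exI[of _ pB] exI[of _ qB] exI[of _ pA] exI[of _ qA]) (auto simp: algebra_simps)
      qed
    qed
  qed
qed



instance grp :: finite
proof
  have "UNIV = {A, B}" by (auto intro: grp.exhaust)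
  then show "finite (UNIV :: grp set)" by (metis finite.emptyI finite.insertI)
qed

lemma K_meas_count:
  assumes zm: "(\<lambda>(x, z, y). z) \<in> N \<rightarrow>\<^sub>M count_space UNIV"
      and ym: "(\<lambda>(x, z, y). y) \<in> N \<rightarrow>\<^sub>M count_space UNIV"
      and hm: "(\<lambda>(x, z, y). h (x, z)) \<in> N \<rightarrow>\<^sub>M count_space UNIV"
  shows "(\<lambda>(x, z, y). (y, z, h (x, z)) :: bool \<times> grp \<times> bool) \<in> N \<rightarrow>\<^sub>M count_space UNIV"
proof (subst measurable_count_space_eq2_countable, intro conjI ballI)
  show "(\<lambda>(x, z, y). (y, z, h (x, z))) \<in> space N \<rightarrow> UNIV" by simp
  fix a :: "bool \<times> grp \<times> bool"
  obtain yy zz bb where a: "a = (yy, zz, bb)" by (cases a) auto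
  have "(\<lambda>(x, z, y). (y, z, h (x, z))) -` {a} \<inter> space N =
     ((\<lambda>(x, z, y). y) -` {yy} \<inter> space N) \<inter> ((\<lambda>(x, z, y). z) -` {zz} \<inter> space N)
       \<inter> ((\<lambda>(x, z, y). h (x, z)) -` {bb} \<inter> space N)"
    by (auto simp: a)
  also have "\<dots> \<in> sets N"
    using measurable_sets[OF zm, of "{zz}"] measurable_sets[OF ym, of "{yy}"] measurable_sets[OF hm, of "{bb}"]
    by auto
  finally show "(\<lambda>(x, z, y). (y, z, h (x, z))) -` {a} \<inter> space N \<in> sets N" .
qed

lemma G_meas:
  fixes G :: "bool \<times> grp \<times> bool \<Rightarrow> real"
  assumes zm: "(\<lambda>(x, z, y). z) \<in> N \<rightarrow>\<^sub>M count_space UNIV"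
      and ym: "(\<lambda>(x, z, y). y) \<in> N \<rightarrow>\<^sub>M count_space UNIV"
      and hm: "(\<lambda>(x, z, y). h (x, z)) \<in> N \<rightarrow>\<^sub>M count_space UNIV"
  shows "(\<lambda>(x, z, y). G (y, z, h (x, z))) \<in> borel_measurable N"
proof -
  have "(\<lambda>(x, z, y). G (y, z, h (x, z))) = G \<circ> (\<lambda>(x, z, y). (y, z, h (x, z)))"
    by (auto simp: fun_eq_iff)
  also have "\<dots> \<in> borel_measurable N"
    by (rule measurable_comp[OF K_meas_count[OF zm ym hm]]) simp
  finally show ?thesis .
qed

lemma G_int:
  fixes G :: "bool \<times> grp \<times> bool \<Rightarrow> real"
  assumes fm: "finite_measure N"
      and zm: "(\<lambda>(x, z, y). z) \<in> N \<rightarrow>\<^sub>M count_space UNIV"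
      and ym: "(\<lambda>(x, z, y). y) \<in> N \<rightarrow>\<^sub>M count_space UNIV"
      and hm: "(\<lambda>(x, z, y). h (x, z)) \<in> N \<rightarrow>\<^sub>M count_space UNIV"
  shows "integrable N (\<lambda>(x, z, y). G (y, z, h (x, z)))"
proof (rule finite_measure.integrable_const_bound[OF fm _ G_meas[OF zm ym hm]])
  show "AE x in N. norm ((\<lambda>(x, z, y). G (y, z, h (x, z))) x) \<le> (\<Sum>v\<in>UNIV. \<bar>G v\<bar>)"
    by (intro AE_I2) (auto intro!: member_le_sum[of _ UNIV])
qed

lemma G_set:
  fixes \<Phi> :: "bool \<times> grp \<times> bool \<Rightarrow> bool"
  assumes zm: "(\<lambda>(x, z, y). z) \<in> N \<rightarrow>\<^sub>M count_space UNIV"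
      and ym: "(\<lambda>(x, z, y). y) \<in> N \<rightarrow>\<^sub>M count_space UNIV"
      and hm: "(\<lambda>(x, z, y). h (x, z)) \<in> N \<rightarrow>\<^sub>M count_space UNIV"
  shows "{(x, z, y) \<in> space N. \<Phi> (y, z, h (x, z))} \<in> sets N"
proof -
  have "{(x, z, y) \<in> space N. \<Phi> (y, z, h (x, z))} = (\<lambda>(x, z, y). (y, z, h (x, z))) -` {v. \<Phi> v} \<inter> space N"
    by auto
  also have "\<dots> \<in> sets N" by (rule measurable_sets[OF K_meas_count[OF zm ym hm]]) simp
  finally show ?thesis .
qed

lemma G_measure:
  fixes \<Phi> :: "bool \<times> grp \<times> bool \<Rightarrow> bool"
  assumes fm: "finite_measure N"
      and zm: "(\<lambda>(x, z, y). z) \<in> N \<rightarrow>\<^sub>M count_space UNIV"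
      and ym: "(\<lambda>(x, z, y). y) \<in> N \<rightarrow>\<^sub>M count_space UNIV"
      and hm: "(\<lambda>(x, z, y). h (x, z)) \<in> N \<rightarrow>\<^sub>M count_space UNIV"
  shows "measure N {(x, z, y) \<in> space N. \<Phi> (y, z, h (x, z))}
     = (\<integral>(x, z, y). (if \<Phi> (y, z, h (x, z)) then 1 else 0) \<partial>N)"
proof -
  let ?S = "{(x, z, y) \<in> space N. \<Phi> (y, z, h (x, z))}"
  have "measure N ?S = (\<integral>w. indicator ?S w \<partial>N)"
    using G_set[OF zm ym hm] finite_measure.emeasure_finite[OF fm] by (simp add: top.not_eq_extremum)
  also have "\<dots> = (\<integral>(x, z, y). (if \<Phi> (y, z, h (x, z)) then 1 else 0) \<partial>N)"
    by (intro Bochner_Integration.integral_cong) (auto simp: indicator_def split: if_split_asm)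
  finally show ?thesis .
qed



lemma mix_props:
  assumes D: "prob_space D" and Q: "prob_space Q" and sQ: "sets Q = sets D" and a0: "0 \<le> \<alpha>" and a1: "\<alpha> \<le> 1"
  shows "space (mix_measure \<alpha> D Q) = space D" "sets (mix_measure \<alpha> D Q) = sets D"
    "\<And>S. S \<in> sets D \<Longrightarrow> measure (mix_measure \<alpha> D Q) S = (1-\<alpha>) * measure D S + \<alpha> * measure Q S"
    "prob_space (mix_measure \<alpha> D Q)"
proof -
  let ?\<mu> = "\<lambda>S. ennreal (1 - \<alpha>) * emeasure D S + ennreal \<alpha> * emeasure Q S"
  have sub: "sets D \<subseteq> Pow (space D)" by (simp add: sets.space_closed)
  show sp: "space (mix_measure \<alpha> D Q) = space D" unfolding mix_measure_def using sub by simp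
  show ss: "sets (mix_measure \<alpha> D Q) = sets D" unfolding mix_measure_def using sub
    by (simp add: sets.sigma_sets_eq)
  have em: "emeasure (mix_measure \<alpha> D Q) S = ?\<mu> S" if S: "S \<in> sets D" for S
    unfolding mix_measure_def
  proof (rule emeasure_measure_of_sigma)
    show "sigma_algebra (space D) (sets D)" by (rule sets.sigma_algebra_axioms)
    show "positive (sets D) ?\<mu>" by (simp add: positive_def)
    show "countably_additive (sets D) ?\<mu>"
    proof (unfold countably_additive_def, intro allI impI)
      fix F :: "nat \<Rightarrow> _" assume F: "range F \<subseteq> sets D" "disjoint_family F" "\<Union> (range F) \<in> sets D"
      have FQ: "range F \<subseteq> sets Q" using F sQ by simp
      have "(\<Sum>i. ?\<mu> (F i)) = (\<Sum>i. ennreal (1 - \<alpha>) * emeasure D (F i)) + (\<Sum>i. ennreal \<alpha> * emeasure Q (F i))"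
        by (subst suminf_add) auto
      also have "\<dots> = ?\<mu> (\<Union> (range F))"
        using suminf_emeasure[OF F(1,2)] suminf_emeasure[OF FQ F(2)] by simp
      finally show "(\<Sum>i. ?\<mu> (F i)) = ?\<mu> (\<Union> (range F))" .
    qed
    show "S \<in> sets D" by fact
  qed
  show meq: "measure (mix_measure \<alpha> D Q) S = (1-\<alpha>) * measure D S + \<alpha> * measure Q S" if S: "S \<in> sets D" for S
  proof -
    have SQ: "S \<in> sets Q" using S sQ by simp
    have fD: "finite_measure D" "finite_measure Q" using D Q by (simp_all add: prob_space_def)
    have "emeasure (mix_measure \<alpha> D Q) S = ennreal (1-\<alpha>) * ennreal (measure D S) + ennreal \<alpha> * ennreal (measure Q S)"
      using em[OF S] finite_measure.emeasure_eq_measure[OF fD(1)] finite_measure.emeasure_eq_measure[OF fD(2)]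
      by simp
    also have "\<dots> = ennreal ((1-\<alpha>) * measure D S + \<alpha> * measure Q S)"
      using a0 a1 by (simp add: ennreal_plus ennreal_mult)
    finally have "emeasure (mix_measure \<alpha> D Q) S = ennreal ((1-\<alpha>) * measure D S + \<alpha> * measure Q S)" .
    note eq = this
    have nn: "0 \<le> (1-\<alpha>) * measure D S + \<alpha> * measure Q S" using a0 a1 by (simp add: measure_nonneg)
    have "measure (mix_measure \<alpha> D Q) S = enn2real (emeasure (mix_measure \<alpha> D Q) S)" by (rule measure_def)
    also have "\<dots> = (1-\<alpha>) * measure D S + \<alpha> * measure Q S" by (simp only: eq enn2real_ennreal[OF nn])
    finally show ?thesis .
  qed
  show "prob_space (mix_measure \<alpha> D Q)"
  proof (rule prob_spaceI)
    have "emeasure (mix_measure \<alpha> D Q) (space (mix_measure \<alpha> D Q)) = ?\<mu> (space D)"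
      using em[of "space D"] sp by simp
    also have "\<dots> = ennreal (1 - \<alpha>) + ennreal \<alpha>"
      using prob_space.emeasure_space_1[OF D] prob_space.emeasure_space_1[OF Q]
        sets_eq_imp_space_eq[OF sQ] by simp
    also have "\<dots> = 1" using a0 a1 by (simp flip: ennreal_plus)
    finally show "emeasure (mix_measure \<alpha> D Q) (space (mix_measure \<alpha> D Q)) = 1" .
  qed
qed

lemma num_ind:
  assumes fm: "finite_measure N"
      and zm: "(\<lambda>(x, z, y). z) \<in> N \<rightarrow>\<^sub>M count_space UNIV"
      and ym: "(\<lambda>(x, z, y). y) \<in> N \<rightarrow>\<^sub>M count_space UNIV"
      and hm: "(\<lambda>(x, z, y). h (x, z)) \<in> N \<rightarrow>\<^sub>M count_space UNIV"
  shows "(\<integral>(x, z, y). (if y \<and> z = g then ind h (x, z) else 0) \<partial>N)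
        = measure N {(x, z, y) \<in> space N. y \<and> z = g \<and> h (x, z)}"
proof -
  have "(\<integral>(x, z, y). (if y \<and> z = g then ind h (x, z) else 0) \<partial>N)
     = (\<integral>(x, z, y). (if y \<and> z = g \<and> h (x, z) then 1 else 0) \<partial>N)"
    by (intro Bochner_Integration.integral_cong) (auto simp: ind_def)
  also have "\<dots> = measure N {(x, z, y) \<in> space N. y \<and> z = g \<and> h (x, z)}"
    using G_measure[OF fm zm ym hm, of "\<lambda>(y, z, b). y \<and> z = g \<and> b"] by simp
  finally show ?thesis .
qed

lemma num_lin:
  fixes p q :: "grp \<Rightarrow> real"
  assumes fm: "finite_measure N"
      and zm: "(\<lambda>(x, z, y). z) \<in> N \<rightarrow>\<^sub>M count_space UNIV"
      and ym: "(\<lambda>(x, z, y). y) \<in> N \<rightarrow>\<^sub>M count_space UNIV"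
      and hm: "(\<lambda>(x, z, y). h (x, z)) \<in> N \<rightarrow>\<^sub>M count_space UNIV"
  shows "(\<integral>(x, z, y). (if y \<and> z = g then (\<lambda>(x, z). (1 - p z) * ind h (x, z) + p z * q z) (x, z) else 0) \<partial>N)
     = (1 - p g) * (\<integral>(x, z, y). (if y \<and> z = g then ind h (x, z) else 0) \<partial>N)
       + p g * q g * measure N {(x, z, y) \<in> space N. y \<and> z = g}"
proof -
  have i1: "integrable N (\<lambda>(x, z, y). if y \<and> z = g then ind h (x, z) else 0)"
    using G_int[OF fm zm ym hm, of "\<lambda>(y, z, b). if y \<and> z = g then (if b then 1 else 0) else 0"]
    unfolding ind_def by simp
  have i2: "integrable N (\<lambda>(x, z, y). if y \<and> z = g then 1 else 0 :: real)"
    using G_int[OF fm zm ym hm, of "\<lambda>(y, z, b). if y \<and> z = g then 1 else 0"]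
    by simp
  have m2: "measure N {(x, z, y) \<in> space N. y \<and> z = g} = (\<integral>(x, z, y). (if y \<and> z = g then 1 else 0) \<partial>N)"
    using G_measure[OF fm zm ym hm, of "\<lambda>(y, z, b). y \<and> z = g"] by simp
  have "(\<integral>(x, z, y). (if y \<and> z = g then (\<lambda>(x, z). (1 - p z) * ind h (x, z) + p z * q z) (x, z) else 0) \<partial>N)
     = (\<integral>w. (1 - p g) * (\<lambda>(x, z, y). if y \<and> z = g then ind h (x, z) else 0) w
            + (p g * q g) * (\<lambda>(x, z, y). if y \<and> z = g then 1 else 0 :: real) w \<partial>N)"
    by (intro Bochner_Integration.integral_cong) auto
  also have "\<dots> = (1 - p g) * (\<integral>(x, z, y). (if y \<and> z = g then ind h (x, z) else 0) \<partial>N)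
       + p g * q g * (\<integral>(x, z, y). (if y \<and> z = g then 1 else 0) \<partial>N)"
    using i1 i2 by simp
  finally show ?thesis using m2 by simp
qed

lemma err_bound:
  fixes p q :: "grp \<Rightarrow> real"
  assumes fm: "finite_measure N"
      and zm: "(\<lambda>(x, z, y). z) \<in> N \<rightarrow>\<^sub>M count_space UNIV"
      and ym: "(\<lambda>(x, z, y). y) \<in> N \<rightarrow>\<^sub>M count_space UNIV"
      and hm: "(\<lambda>(x, z, y). h (x, z)) \<in> N \<rightarrow>\<^sub>M count_space UNIV"
      and pq: "\<And>g. 0 \<le> p g \<and> p g \<le> 1 \<and> 0 \<le> q g \<and> q g \<le> 1"
  shows "\<bar>err N (\<lambda>(x, z). (1 - p z) * ind h (x, z) + p z * q z) - err N (ind h)\<bar>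
     \<le> p A * measure N {(x, z, y) \<in> space N. z = A} + p B * measure N {(x, z, y) \<in> space N. z = B}"
proof -
  let ?F1 = "\<lambda>(x, z, y). if y then 1 - ((1 - p z) * ind h (x, z) + p z * q z) else (1 - p z) * ind h (x, z) + p z * q z"
  let ?F0 = "\<lambda>(x, z, y). if y then 1 - ind h (x, z) else ind h (x, z)"
  have i1: "integrable N ?F1"
    using G_int[OF fm zm ym hm, of "\<lambda>(y, z, b). if y then 1 - ((1 - p z) * (if b then 1 else 0) + p z * q z) else (1 - p z) * (if b then 1 else 0) + p z * q z"]
    unfolding ind_def by simp
  have i0: "integrable N ?F0"
    using G_int[OF fm zm ym hm, of "\<lambda>(y, z, b). if y then 1 - (if b then 1 else 0) else (if b then 1 else 0)"]
    unfolding ind_def by simp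
  have iA: "integrable N (\<lambda>(x, z, y). if z = A then 1 else 0 :: real)"
    using G_int[OF fm zm ym hm, of "\<lambda>(y, z, b). if z = A then 1 else 0"] by simp
  have iB: "integrable N (\<lambda>(x, z, y). if z = B then 1 else 0 :: real)"
    using G_int[OF fm zm ym hm, of "\<lambda>(y, z, b). if z = B then 1 else 0"] by simp
  have mA: "measure N {(x, z, y) \<in> space N. z = A} = (\<integral>(x, z, y). (if z = A then 1 else 0) \<partial>N)"
    using G_measure[OF fm zm ym hm, of "\<lambda>(y, z, b). z = A"] by simp
  have mB: "measure N {(x, z, y) \<in> space N. z = B} = (\<integral>(x, z, y). (if z = B then 1 else 0) \<partial>N)"
    using G_measure[OF fm zm ym hm, of "\<lambda>(y, z, b). z = B"] by simp
  let ?R = "\<lambda>w. p A * (\<lambda>(x, z, y). if z = A then 1 else 0 :: real) w + p B * (\<lambda>(x, z, y). if z = B then 1 else 0 :: real) w"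
  have "err N (\<lambda>(x, z). (1 - p z) * ind h (x, z) + p z * q z) - err N (ind h) = (\<integral>w. ?F1 w \<partial>N) - (\<integral>w. ?F0 w \<partial>N)"
    unfolding err_def by (intro arg_cong2[where f="(-)"] Bochner_Integration.integral_cong) auto
  also have "\<dots> = (\<integral>w. ?F1 w - ?F0 w \<partial>N)" using i1 i0 by (rule Bochner_Integration.integral_diff[symmetric])
  finally have eqd: "err N (\<lambda>(x, z). (1 - p z) * ind h (x, z) + p z * q z) - err N (ind h) = (\<integral>w. ?F1 w - ?F0 w \<partial>N)" .
  have "\<bar>(\<integral>w. ?F1 w - ?F0 w \<partial>N)\<bar> \<le> (\<integral>w. \<bar>?F1 w - ?F0 w\<bar> \<partial>N)" by (rule integral_abs_bound)
  also have "\<dots> \<le> (\<integral>w. ?R w \<partial>N)"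
  proof (rule integral_mono)
    show "integrable N (\<lambda>w. \<bar>?F1 w - ?F0 w\<bar>)"
      by (intro integrable_abs Bochner_Integration.integrable_diff i1 i0)
    show "integrable N ?R"
      by (intro Bochner_Integration.integrable_add integrable_mult_right iA iB)
    fix w
    show "\<bar>?F1 w - ?F0 w\<bar> \<le> ?R w"
    proof -
    obtain x z y where w: "w = (x, z, y)" by (cases w) auto
    have e: "?F1 w - ?F0 w = (if y then -(p z * (q z - ind h (x, z))) else p z * (q z - ind h (x, z)))"
      by (simp add: w algebra_simps)
    have "\<bar>?F1 w - ?F0 w\<bar> = p z * \<bar>q z - ind h (x, z)\<bar>"
      unfolding e using pq[of z] by (simp add: abs_mult)
    also have "\<dots> \<le> p z * 1"
      using pq[of z] by (intro mult_left_mono) (auto simp: ind_def)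
    also have "\<dots> = ?R w" by (cases z) (simp_all add: w)
    finally show ?thesis .
    qed
  qed
  also have "\<dots> = p A * measure N {(x, z, y) \<in> space N. z = A} + p B * measure N {(x, z, y) \<in> space N. z = B}"
    using iA iB mA mB by simp
  finally show ?thesis unfolding eqd .
qed



lemma dev_bound:
  fixes a b a' b' \<alpha> :: real
  assumes "0\<le>a" "a\<le>b" "0<b" "0\<le>a'" "a'\<le>b'" "b'\<le>1" "0\<le>\<alpha>" "\<alpha>\<le>1/2"
  shows "\<bar>((1-\<alpha>) * a+\<alpha> * a')/((1-\<alpha>) * b+\<alpha> * b') - a/b\<bar> * b \<le> 2 * \<alpha>"
proof -
  define N where "N = (1-\<alpha>) * b+\<alpha> * b'"
  have h1: "(1/2) * b \<le> (1-\<alpha>) * b" using assms by (intro mult_right_mono) auto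
  have h2: "0 \<le> \<alpha> * b'" using assms by simp
  have Nb: "b \<le> 2 * N" unfolding N_def using h1 h2 by (simp add: algebra_simps)
  have N0: "N > 0" using Nb assms by simp
  have e1: "((1-\<alpha>) * a+\<alpha> * a')/N - a/b = (b * ((1-\<alpha>) * a+\<alpha> * a') - a * N)/(b * N)"
    using N0 assms by (simp add: field_simps)
  have e2: "b * ((1-\<alpha>) * a+\<alpha> * a') - a * N = \<alpha> * (a' * b - a * b')" unfolding N_def by (simp add: algebra_simps)
  have e: "(((1-\<alpha>) * a+\<alpha> * a')/N - a/b) * b = \<alpha> * (a' * b - a * b')/N"
    unfolding e1 e2 using N0 assms by simp
  have t1: "0 \<le> a' * b" "a' * b \<le> b" using assms by (auto simp: mult_le_cancel_right1 mult_nonneg_nonneg)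
  have t2: "0 \<le> a * b'" "a * b' \<le> b"
  proof -
    show "0 \<le> a * b'" using assms by simp
    have "a * b' \<le> a * 1" using assms by (intro mult_left_mono) auto
    then show "a * b' \<le> b" using assms by simp
  qed
  have d: "\<bar>a' * b - a * b'\<bar> \<le> b" using t1 t2 by linarith
  have "\<bar>((1-\<alpha>) * a+\<alpha> * a')/N - a/b\<bar> * b = \<bar>(((1-\<alpha>) * a+\<alpha> * a')/N - a/b) * b\<bar>"
    using assms by (simp add: abs_mult)
  also have "\<dots> = \<alpha> * \<bar>a' * b - a * b'\<bar>/N" unfolding e using assms N0 by (simp add: abs_mult)
  also have "\<dots> \<le> \<alpha> * b/N" using d assms N0 by (intro divide_right_mono mult_left_mono) auto
  also have "\<dots> \<le> 2 * \<alpha>"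
  proof -
    have "\<alpha> * b \<le> \<alpha> * (2 * N)" by (rule mult_left_mono[OF Nb]) (use assms in simp)
    then show ?thesis using N0 by (simp add: pos_divide_le_eq mult.assoc mult.left_commute)
  qed
  finally show ?thesis unfolding N_def .
qed



lemma main_lemma:
  fixes c :: nat and H :: "('x \<times> grp \<Rightarrow> bool) set" and D :: "'x sample measure" and Q :: "'x sample measure"
  assumes c1: "c \<ge> 1" and D: "prob_space D"
    and zm: "(\<lambda>(x, z, y). z) \<in> D \<rightarrow>\<^sub>M count_space UNIV"
    and ym: "(\<lambda>(x, z, y). y) \<in> D \<rightarrow>\<^sub>M count_space UNIV"
    and hmH: "\<forall>h \<in> H. (\<lambda>(x, z, y). h (x, z)) \<in> D \<rightarrow>\<^sub>M count_space UNIV"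
    and cb: "\<forall>g. measure D {(x, z, y) \<in> space D. y \<and> z = g}
              \<ge> measure D {(x, z, y) \<in> space D. z = g} / real c"
    and wpos: "\<forall>g. measure D {(x, z, y) \<in> space D. z = g} > 0"
    and hsH: "hstar \<in> H" and eo: "equal_opportunity D (ind hstar)"
    and \<alpha>: "\<alpha> \<in> {0..1/2}" and Q: "prob_space Q" and sQ: "sets Q = sets D"
  shows "\<exists>hhat \<in> PQ H. equal_opportunity (mix_measure \<alpha> D Q) hhat \<and>
             \<bar>err D hhat - err D (ind hstar)\<bar> \<le> (16 + real c) * sqrt \<alpha>"
proof -
  define M where "M = mix_measure \<alpha> D Q"
  have a0: "0 \<le> \<alpha>" and a1: "\<alpha> \<le> 1/2" using \<alpha> by auto
  have spM: "space M = space D" and ssM: "sets M = sets D"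
    and mM: "\<And>S. S \<in> sets D \<Longrightarrow> measure M S = (1-\<alpha>) * measure D S + \<alpha> * measure Q S"
    and pM: "prob_space M"
    using mix_props[OF D Q sQ a0] a1 unfolding M_def by auto
  have spQ: "space Q = space D" using sets_eq_imp_space_eq[OF sQ] .
  have hm: "(\<lambda>(x, z, y). hstar (x, z)) \<in> D \<rightarrow>\<^sub>M count_space UNIV" using hmH hsH by blast
  have fD: "finite_measure D" and fQ: "finite_measure Q" and fM: "finite_measure M"
    using D Q pM by (simp_all add: prob_space_def)
  have zmM: "(\<lambda>(x, z, y). z) \<in> M \<rightarrow>\<^sub>M count_space UNIV"
    by (subst measurable_cong_sets[OF ssM refl]) (rule zm)
  have ymM: "(\<lambda>(x, z, y). y) \<in> M \<rightarrow>\<^sub>M count_space UNIV"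
    by (subst measurable_cong_sets[OF ssM refl]) (rule ym)
  have hmM: "(\<lambda>(x, z, y). hstar (x, z)) \<in> M \<rightarrow>\<^sub>M count_space UNIV"
    by (subst measurable_cong_sets[OF ssM refl]) (rule hm)
  have zmQ: "(\<lambda>(x, z, y). z) \<in> Q \<rightarrow>\<^sub>M count_space UNIV"
    by (subst measurable_cong_sets[OF sQ refl]) (rule zm)
  have ymQ: "(\<lambda>(x, z, y). y) \<in> Q \<rightarrow>\<^sub>M count_space UNIV"
    by (subst measurable_cong_sets[OF sQ refl]) (rule ym)
  have hmQ: "(\<lambda>(x, z, y). hstar (x, z)) \<in> Q \<rightarrow>\<^sub>M count_space UNIV"
    by (subst measurable_cong_sets[OF sQ refl]) (rule hm)

  define bD where "bD g = measure D {(x, z, y) \<in> space D. y \<and> z = g}" for g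
  define aD where "aD g = measure D {(x, z, y) \<in> space D. y \<and> z = g \<and> hstar (x, z)}" for g
  define wD where "wD g = measure D {(x, z, y) \<in> space D. z = g}" for g
  define bQ where "bQ g = measure Q {(x, z, y) \<in> space D. y \<and> z = g}" for g
  define aQ where "aQ g = measure Q {(x, z, y) \<in> space D. y \<and> z = g \<and> hstar (x, z)}" for g
  define tM where "tM g = tpr M (ind hstar) g" for g

  have Pset: "{(x, z, y) \<in> space D. y \<and> z = g} \<in> sets D" for g
    using G_set[OF zm ym hm, of "\<lambda>(y, z, b). y \<and> z = g"] by simp
  have Eset: "{(x, z, y) \<in> space D. y \<and> z = g \<and> hstar (x, z)} \<in> sets D" for g
    using G_set[OF zm ym hm, of "\<lambda>(y, z, b). y \<and> z = g \<and> b"] by simp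
  have EP: "{(x, z, y) \<in> space D. y \<and> z = g \<and> hstar (x, z)} \<subseteq> {(x, z, y) \<in> space D. y \<and> z = g}" for g
    by auto

  have bM: "measure M {(x, z, y) \<in> space M. y \<and> z = g} = (1-\<alpha>) * bD g + \<alpha> * bQ g" for g
    unfolding spM bD_def bQ_def by (rule mM[OF Pset])
  have aM: "(\<integral>(x, z, y). (if y \<and> z = g then ind hstar (x, z) else 0) \<partial>M) = (1-\<alpha>) * aD g + \<alpha> * aQ g" for g
    unfolding num_ind[OF fM zmM ymM hmM] spM aD_def aQ_def by (rule mM[OF Eset])
  have tD: "tpr D (ind hstar) g = aD g / bD g" for g
    unfolding tpr_def num_ind[OF fD zm ym hm] aD_def bD_def ..
  have tMe: "tM g = ((1-\<alpha>) * aD g + \<alpha> * aQ g) / ((1-\<alpha>) * bD g + \<alpha> * bQ g)" for g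
    unfolding tM_def tpr_def aM bM ..

  have wD1: "wD g \<le> 1" "0 \<le> wD g" for g unfolding wD_def using prob_space.prob_le_1[OF D] by (auto simp: measure_nonneg)
  have wpos': "wD g > 0" for g using wpos wD_def by auto
  have cb': "wD g \<le> real c * bD g" for g
  proof -
    have "wD g / real c \<le> bD g" using cb unfolding wD_def bD_def by auto
    then show ?thesis using c1 by (simp add: pos_divide_le_eq mult.commute)
  qed
  have bDpos: "bD g > 0" for g
  proof -
    have "wD g / real c > 0" using wpos'[of g] c1 by simp
    then show ?thesis using cb unfolding wD_def bD_def by (meson less_le_trans)
  qed
  have aDb: "0 \<le> aD g" "aD g \<le> bD g" for g
    unfolding aD_def bD_def using finite_measure.finite_measure_mono[OF fD EP Pset] by (auto simp: measure_nonneg)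
  have aQb: "0 \<le> aQ g" "aQ g \<le> bQ g" "bQ g \<le> 1" for g
  proof -
    have Ps: "{(x, z, y) \<in> space D. y \<and> z = g} \<in> sets Q" using Pset sQ by simp
    show "0 \<le> aQ g" unfolding aQ_def by (simp add: measure_nonneg)
    show "aQ g \<le> bQ g" unfolding aQ_def bQ_def using finite_measure.finite_measure_mono[OF fQ EP Ps] .
    show "bQ g \<le> 1" unfolding bQ_def using prob_space.prob_le_1[OF Q] by auto
  qed
  have dM: "(1-\<alpha>) * bD g + \<alpha> * bQ g > 0" for g
  proof -
    have "(1-\<alpha>) * bD g > 0" using bDpos[of g] a1 by simp
    moreover have "\<alpha> * bQ g \<ge> 0" using a0 aQb[of g] by simp
    ultimately show ?thesis by linarith
  qed
  have tM01: "0 \<le> tM g" "tM g \<le> 1" for g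
  proof -
    have n0: "0 \<le> (1-\<alpha>) * aD g + \<alpha> * aQ g" using a0 a1 aDb[of g] aQb[of g] by simp
    have "(1-\<alpha>) * aD g \<le> (1-\<alpha>) * bD g" using a1 aDb[of g] by (intro mult_left_mono) auto
    moreover have "\<alpha> * aQ g \<le> \<alpha> * bQ g" using a0 aQb[of g] by (intro mult_left_mono) auto
    ultimately have n1: "(1-\<alpha>) * aD g + \<alpha> * aQ g \<le> (1-\<alpha>) * bD g + \<alpha> * bQ g" by linarith
    show "0 \<le> tM g" unfolding tMe using n0 dM[of g] by simp
    show "tM g \<le> 1" unfolding tMe using n1 dM[of g] by simp
  qed
  define \<tau> where "\<tau> = aD A / bD A"
  have tauB: "\<tau> = aD B / bD B" using eo unfolding equal_opportunity_def tD \<tau>_def .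
  have dev: "\<bar>tM g - \<tau>\<bar> * bD g \<le> 2 * \<alpha>" for g
  proof -
    have "\<tau> = aD g / bD g" using tauB \<tau>_def by (cases g) auto
    then show ?thesis unfolding tMe
      using dev_bound[of "aD g" "bD g" "aQ g" "bQ g" \<alpha>] aDb[of g] bDpos[of g] aQb[of g] a0 a1 by simp
  qed
  have ex: "\<exists>pA qA pB qB. 0\<le>pA \<and> pA\<le>1 \<and> 0\<le>qA \<and> qA\<le>1 \<and> 0\<le>pB \<and> pB\<le>1 \<and> 0\<le>qB \<and> qB\<le>1
     \<and> (1-pA) * tM A + pA * qA = (1-pB) * tM B + pB * qB \<and> pA * wD A + pB * wD B \<le> (16 + real c) * sqrt \<alpha>"
    by (rule core[OF a0 tM01(1)[of A] tM01(2)[of A] tM01(1)[of B] tM01(2)[of B] bDpos[of A] bDpos[of B]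
        cb'[of A] cb'[of B] wD1(2)[of A] wD1(1)[of A] wD1(2)[of B] wD1(1)[of B] dev[of A] dev[of B]]) simp
  then obtain pA qA pB qB where pq: "0\<le>pA \<and> pA\<le>1 \<and> 0\<le>qA \<and> qA\<le>1 \<and> 0\<le>pB \<and> pB\<le>1 \<and> 0\<le>qB \<and> qB\<le>1
     \<and> (1-pA) * tM A + pA * qA = (1-pB) * tM B + pB * qB \<and> pA * wD A + pB * wD B \<le> (16 + real c) * sqrt \<alpha>"
    by (elim exE)
  have eqt: "(1-pA) * tM A + pA * qA = (1-pB) * tM B + pB * qB"
     and cost: "pA * wD A + pB * wD B \<le> (16 + real c) * sqrt \<alpha>" using pq by auto
  define p where "p g = (case g of A \<Rightarrow> pA | B \<Rightarrow> pB)" for g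
  define q where "q g = (case g of A \<Rightarrow> qA | B \<Rightarrow> qB)" for g
  have pqb: "0 \<le> p g \<and> p g \<le> 1 \<and> 0 \<le> q g \<and> q g \<le> 1" for g
    using pq by (cases g) (auto simp: p_def q_def)
  define hhat where "hhat = (\<lambda>(x, z). (1 - p z) * ind hstar (x, z) + p z * q z)"
  have inPQ: "hhat \<in> PQ H"
    unfolding PQ_def hhat_def
    by (rule CollectI, rule exI[of _ hstar], rule exI[of _ p], rule exI[of _ q]) (use hsH pqb in auto)
  have tprh: "tpr M hhat g = (1 - p g) * tM g + p g * q g" for g
  proof -
    have "tpr M hhat g = ((1 - p g) * (\<integral>(x, z, y). (if y \<and> z = g then ind hstar (x, z) else 0) \<partial>M)
       + p g * q g * measure M {(x, z, y) \<in> space M. y \<and> z = g}) / measure M {(x, z, y) \<in> space M. y \<and> z = g}"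
      unfolding tpr_def hhat_def num_lin[OF fM zmM ymM hmM] ..
    also have "\<dots> = (1 - p g) * tM g + p g * q g"
      unfolding tM_def tpr_def using dM[of g] bM[of g] by (simp add: field_simps)
    finally show ?thesis .
  qed
  have "equal_opportunity M hhat"
    unfolding equal_opportunity_def tprh using eqt by (simp add: p_def q_def)
  moreover have "\<bar>err D hhat - err D (ind hstar)\<bar> \<le> (16 + real c) * sqrt \<alpha>"
  proof -
    have "\<bar>err D hhat - err D (ind hstar)\<bar> \<le> p A * wD A + p B * wD B"
      unfolding hhat_def wD_def by (rule err_bound[OF fD zm ym hm pqb])
    then show ?thesis using cost by (simp add: p_def)
  qed
  ultimately show ?thesis using inPQ unfolding M_def by blast
qed


theorem mainTheorem7:
  fixes c :: nat
  assumes "c \<ge> 1"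
  shows "\<exists>C > 0. \<exists>\<alpha>0. 0 < \<alpha>0 \<and> \<alpha>0 < 1 \<and>
    (\<forall>(H :: ('x \<times> grp \<Rightarrow> bool) set) (D :: 'x sample measure) hstar.
       prob_space D \<longrightarrow>
       (\<lambda>(x, z, y). z) \<in> D \<rightarrow>\<^sub>M count_space UNIV \<longrightarrow>
       (\<lambda>(x, z, y). y) \<in> D \<rightarrow>\<^sub>M count_space UNIV \<longrightarrow>
       (\<forall>h \<in> H. (\<lambda>(x, z, y). h (x, z)) \<in> D \<rightarrow>\<^sub>M count_space UNIV) \<longrightarrow>
       (\<forall>g. measure D {(x, z, y) \<in> space D. y \<and> z = g}
              \<ge> measure D {(x, z, y) \<in> space D. z = g} / real c) \<longrightarrow>
       (\<forall>g. measure D {(x, z, y) \<in> space D. z = g} > 0) \<longrightarrow>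
       hstar \<in> H \<longrightarrow> equal_opportunity D (ind hstar) \<longrightarrow>
       (\<forall>h \<in> H. equal_opportunity D (ind h) \<longrightarrow> err D (ind hstar) \<le> err D (ind h)) \<longrightarrow>
       (\<forall>\<alpha> \<in> {0..\<alpha>0}. \<forall>Q. prob_space Q \<longrightarrow> sets Q = sets D \<longrightarrow>
          (\<exists>hhat \<in> PQ H. equal_opportunity (mix_measure \<alpha> D Q) hhat \<and>
             \<bar>err D hhat - err D (ind hstar)\<bar> \<le> C * sqrt \<alpha>)))"
  proof (rule exI[of _ "16 + real c"], rule conjI)
  show "(0::real) < 16 + real c" by simp
  show "\<exists>\<alpha>0. 0 < \<alpha>0 \<and> \<alpha>0 < 1 \<and>
    (\<forall>(H :: ('x \<times> grp \<Rightarrow> bool) set) (D :: 'x sample measure) hstar.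
       prob_space D \<longrightarrow>
       (\<lambda>(x, z, y). z) \<in> D \<rightarrow>\<^sub>M count_space UNIV \<longrightarrow>
       (\<lambda>(x, z, y). y) \<in> D \<rightarrow>\<^sub>M count_space UNIV \<longrightarrow>
       (\<forall>h \<in> H. (\<lambda>(x, z, y). h (x, z)) \<in> D \<rightarrow>\<^sub>M count_space UNIV) \<longrightarrow>
       (\<forall>g. measure D {(x, z, y) \<in> space D. y \<and> z = g}
              \<ge> measure D {(x, z, y) \<in> space D. z = g} / real c) \<longrightarrow>
       (\<forall>g. measure D {(x, z, y) \<in> space D. z = g} > 0) \<longrightarrow>
       hstar \<in> H \<longrightarrow> equal_opportunity D (ind hstar) \<longrightarrow>
       (\<forall>h \<in> H. equal_opportunity D (ind h) \<longrightarrow> err D (ind hstar) \<le> err D (ind h)) \<longrightarrow>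
       (\<forall>\<alpha> \<in> {0..\<alpha>0}. \<forall>Q. prob_space Q \<longrightarrow> sets Q = sets D \<longrightarrow>
          (\<exists>hhat \<in> PQ H. equal_opportunity (mix_measure \<alpha> D Q) hhat \<and>
             \<bar>err D hhat - err D (ind hstar)\<bar> \<le> (16 + real c) * sqrt \<alpha>)))"
    apply (rule exI[of _ "1/2"])
    apply (intro conjI allI impI ballI)
      apply simp
     apply simp
    apply (rule main_lemma[OF assms])
              apply assumption+
    done
qed

end
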